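(* Let $G$ be a finite simple connected graph containing no cycle of length $3$ and no cycle of length $5$ as a subgraph, and let $\kappa>0$ be such that $\kappa_{LLY}(u,v)\ge\kappa$ for every edge $uv$ of $G$. Then for any vertex $x$ and any vertex $y$ with $d(x,y)=i$, where $1\le i\le \mathrm{diam}(G)\le\lfloor 2/\kappa\rfloor$, $$|\Gamma^+_x(y)|+|\Gamma^0_x(y)|\le\left(1-\frac{i\kappa}{2}\right)d_y.$$
   Context: For vertices $u,v$ of a connected graph $G$, $d(u,v)$ is the graph distance, $\mathrm{diam}(G)=\max_{u,v}d(u,v)$, $N(v)$ is the neighborhood of $v$ and $d_v=|N(v)|$. For vertices $x,y$: $\Gamma^-_x(y)=\{u\in N(y): d(x,u)=d(x,y)-1\}$, $\Gamma^0_x(y)=\{u\in N(y): d(x,u)=d(x,y)\}$, $\Gamma^+_x(y)=\{u\in N(y): d(x,u)=d(x,y)+1\}$. For $0\le\alpha<1$, the $\alpha$-lazy random walk is $m_x^\alpha(x)=\alpha$, $m_x^\alpha(v)=(1-\alpha)/d_x$ for $v\in N(x)$, $m_x^\alpha(v)=0$ otherwise. The transportation distance between probability distributions $m_1,m_2$ on $V(G)$ is $W(m_1,m_2)=\inf_A\sum_{x,y}A(x,y)d(x,y)$ over couplings $A:V\times V\to[0,1]$ with marginals $m_1,m_2$. For distinct $x,y$, $\kappa_\alpha(x,y)=1-W(m_x^\alpha,m_y^\alpha)/d(x,y)$ and $\kappa_{LLY}(x,y)=\lim_{\alpha\to1}\kappa_\alpha(x,y)/(1-\alpha)$. (It is known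 that under the curvature hypothesis, $\mathrm{diam}(G)\le 2/\kappa$.) *)

theory Defs
  imports "HOL-Analysis.Analysis"
begin

definition simple_graph :: "'a set \<Rightarrow> ('a \<Rightarrow> 'a \<Rightarrow> bool) \<Rightarrow> bool" where
  "simple_graph V E \<longleftrightarrow> finite V \<and> (\<forall>u v. E u v \<longrightarrow> u \<in> V \<and> v \<in> V)
     \<and> (\<forall>u v. E u v \<longrightarrow> E v u) \<and> (\<forall>u. \<not> E u u)"

inductive walk :: "('a \<Rightarrow> 'a \<Rightarrow> bool) \<Rightarrow> nat \<Rightarrow> 'a \<Rightarrow> 'a \<Rightarrow> bool" for E where
  walk_refl: "walk E 0 u u"
| walk_step: "E u w \<Longrightarrow> walk E n w v \<Longrightarrow> walk E (Suc n) u v"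

definition connected_graph :: "'a set \<Rightarrow> ('a \<Rightarrow> 'a \<Rightarrow> bool) \<Rightarrow> bool" where
  "connected_graph V E \<longleftrightarrow> (\<forall>u\<in>V. \<forall>v\<in>V. \<exists>n. walk E n u v)"

definition gdist :: "('a \<Rightarrow> 'a \<Rightarrow> bool) \<Rightarrow> 'a \<Rightarrow> 'a \<Rightarrow> nat" where
  "gdist E u v = (LEAST n. walk E n u v)"

definition diam :: "'a set \<Rightarrow> ('a \<Rightarrow> 'a \<Rightarrow> bool) \<Rightarrow> nat" where
  "diam V E = Max {gdist E u v | u v. u \<in> V \<and> v \<in> V}"

definition nbhd :: "'a set \<Rightarrow> ('a \<Rightarrow> 'a \<Rightarrow> bool) \<Rightarrow> 'a \<Rightarrow> 'a set" where
  "nbhd V E v = {u \<in> V. E v u}"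

definition deg :: "'a set \<Rightarrow> ('a \<Rightarrow> 'a \<Rightarrow> bool) \<Rightarrow> 'a \<Rightarrow> nat" where
  "deg V E v = card (nbhd V E v)"

definition Gamma_minus :: "'a set \<Rightarrow> ('a \<Rightarrow> 'a \<Rightarrow> bool) \<Rightarrow> 'a \<Rightarrow> 'a \<Rightarrow> 'a set" where
  "Gamma_minus V E x y = {u \<in> nbhd V E y. gdist E x u + 1 = gdist E x y}"

definition Gamma_zero :: "'a set \<Rightarrow> ('a \<Rightarrow> 'a \<Rightarrow> bool) \<Rightarrow> 'a \<Rightarrow> 'a \<Rightarrow> 'a set" where
  "Gamma_zero V E x y = {u \<in> nbhd V E y. gdist E x u = gdist E x y}"

definition Gamma_plus :: "'a set \<Rightarrow> ('a \<Rightarrow> 'a \<Rightarrow> bool) \<Rightarrow> 'a \<Rightarrow> 'a \<Rightarrow> 'a set" where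
  "Gamma_plus V E x y = {u \<in> nbhd V E y. gdist E x u = gdist E x y + 1}"

definition has_C3 :: "'a set \<Rightarrow> ('a \<Rightarrow> 'a \<Rightarrow> bool) \<Rightarrow> bool" where
  "has_C3 V E \<longleftrightarrow> (\<exists>a\<in>V. \<exists>b\<in>V. \<exists>c\<in>V. distinct [a, b, c] \<and> E a b \<and> E b c \<and> E c a)"

definition has_C5 :: "'a set \<Rightarrow> ('a \<Rightarrow> 'a \<Rightarrow> bool) \<Rightarrow> bool" where
  "has_C5 V E \<longleftrightarrow> (\<exists>a\<in>V. \<exists>b\<in>V. \<exists>c\<in>V. \<exists>d\<in>V. \<exists>e\<in>V. distinct [a, b, c, d, e]
      \<and> E a b \<and> E b c \<and> E c d \<and> E d e \<and> E e a)"

definition lazy_walk :: "'a set \<Rightarrow> ('a \<Rightarrow> 'a \<Rightarrow> bool) \<Rightarrow> real \<Rightarrow> 'a \<Rightarrow> 'a \<Rightarrow> real" where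
  "lazy_walk V E \<alpha> x v =
     (if v = x then \<alpha> else if v \<in> nbhd V E x then (1 - \<alpha>) / real (deg V E x) else 0)"

definition coupling :: "'a set \<Rightarrow> ('a \<Rightarrow> real) \<Rightarrow> ('a \<Rightarrow> real) \<Rightarrow> ('a \<Rightarrow> 'a \<Rightarrow> real) \<Rightarrow> bool" where
  "coupling V m1 m2 A \<longleftrightarrow>
     (\<forall>x\<in>V. \<forall>y\<in>V. 0 \<le> A x y \<and> A x y \<le> 1)
     \<and> (\<forall>x\<in>V. (\<Sum>y\<in>V. A x y) = m1 x)
     \<and> (\<forall>y\<in>V. (\<Sum>x\<in>V. A x y) = m2 y)"

definition transport :: "'a set \<Rightarrow> ('a \<Rightarrow> 'a \<Rightarrow> bool) \<Rightarrow> ('a \<Rightarrow> real) \<Rightarrow> ('a \<Rightarrow> real) \<Rightarrow> real" where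
  "transport V E m1 m2 =
     Inf {(\<Sum>x\<in>V. \<Sum>y\<in>V. A x y * real (gdist E x y)) | A. coupling V m1 m2 A}"

definition kappa_alpha :: "'a set \<Rightarrow> ('a \<Rightarrow> 'a \<Rightarrow> bool) \<Rightarrow> real \<Rightarrow> 'a \<Rightarrow> 'a \<Rightarrow> real" where
  "kappa_alpha V E \<alpha> x y =
     1 - transport V E (lazy_walk V E \<alpha> x) (lazy_walk V E \<alpha> y) / real (gdist E x y)"

definition kappa_LLY :: "'a set \<Rightarrow> ('a \<Rightarrow> 'a \<Rightarrow> bool) \<Rightarrow> 'a \<Rightarrow> 'a \<Rightarrow> real" where
  "kappa_LLY V E x y = Lim (at_left 1) (\<lambda>\<alpha>. kappa_alpha V E \<alpha> x y / (1 - \<alpha>))"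

end

theory Submission
  imports Defs
begin

lemma walk_append: "walk E n u v \<Longrightarrow> walk E m v w \<Longrightarrow> walk E (n+m) u w"
proof (induction rule: walk.induct)
  case (walk_refl u)
  then show ?case by simp
next
  case (walk_step u w n v)
  then show ?case by (simp add: walk.walk_step)
qed

lemma walk_snoc: "walk E n u v \<Longrightarrow> E v w \<Longrightarrow> walk E (Suc n) u w"
  using walk_append[of E n u v 1 w] by (auto intro: walk.intros)

lemma walk_sym: assumes "\<forall>a b. E a b \<longrightarrow> E b a" shows "walk E n u v \<Longrightarrow> walk E n v u"
proof (induction rule: walk.induct)
  case (walk_refl u)
  then show ?case by (rule walk.walk_refl)
next
  case (walk_step u w n v)
  then show ?case using walk_snoc assms by metis
qed

lemma walk_0: "walk E 0 u v \<Longrightarrow> u = v"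
  by (erule walk.cases) auto

lemma walk_Suc: "walk E (Suc n) u v \<Longrightarrow> \<exists>z. E u z \<and> walk E n z v"
  by (erule walk.cases) auto

lemma gdist_walk:
  assumes "connected_graph V E" "u \<in> V" "v \<in> V"
  shows "walk E (gdist E u v) u v"
proof -
  obtain n where "walk E n u v" using assms unfolding connected_graph_def by blast
  then show ?thesis unfolding gdist_def by (rule LeastI)
qed

lemma gdist_le: "walk E n u v \<Longrightarrow> gdist E u v \<le> n"
  unfolding gdist_def by (rule Least_le)

lemma gdist_sym:
  assumes "simple_graph V E" "connected_graph V E" "u \<in> V" "v \<in> V"
  shows "gdist E u v = gdist E v u"
proof -
  have s: "\<forall>a b. E a b \<longrightarrow> E b a" using assms(1) unfolding simple_graph_def by blast
  have "gdist E v u \<le> gdist E u v"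
    using gdist_le[OF walk_sym[OF s gdist_walk[OF assms(2,3,4)]]] .
  moreover have "gdist E u v \<le> gdist E v u"
    using gdist_le[OF walk_sym[OF s gdist_walk[OF assms(2,4,3)]]] .
  ultimately show ?thesis by simp
qed

lemma gdist_tri:
  assumes "connected_graph V E" "a \<in> V" "b \<in> V" "c \<in> V"
  shows "gdist E a c \<le> gdist E a b + gdist E b c"
  using gdist_le[OF walk_append[OF gdist_walk[OF assms(1,2,3)] gdist_walk[OF assms(1,3,4)]]] .

lemma gdist_edge: "E u v \<Longrightarrow> gdist E u v \<le> 1"
  using gdist_le[of E 1 u v] by (auto intro: walk.intros)

lemma gdist_0:
  assumes "connected_graph V E" "u \<in> V" "v \<in> V" "gdist E u v = 0" shows "u = v"
proof -
  have "walk E 0 u v" using gdist_walk[OF assms(1,2,3)] assms(4) by simp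
  then show ?thesis by (rule walk_0)
qed

lemma gdist_1:
  assumes "connected_graph V E" "u \<in> V" "v \<in> V" "gdist E u v = 1" shows "E u v"
proof -
  have "walk E (Suc 0) u v" using gdist_walk[OF assms(1,2,3)] assms(4) by simp
  then obtain z where z: "E u z" "walk E 0 z v" using walk_Suc[of E 0 u v] by blast
  then have "z = v" by (intro walk_0)
  then show ?thesis using z by simp
qed

lemma gdist_2:
  assumes "connected_graph V E" "u \<in> V" "v \<in> V" "gdist E u v = 2" shows "\<exists>z. E u z \<and> E z v"
proof -
  have "walk E (Suc (Suc 0)) u v" using gdist_walk[OF assms(1,2,3)] assms(4) by (simp add: numeral_2_eq_2)
  then obtain z where z: "E u z" "walk E (Suc 0) z v" using walk_Suc[of E "Suc 0" u v] by blast
  then obtain z' where z': "E z z'" "walk E 0 z' v" using walk_Suc[of E 0 z v] by blast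
  then have "z' = v" by (intro walk_0)
  then show ?thesis using z z' by blast
qed

lemma gdist_self: "gdist E u u = 0"
  using gdist_le[of E 0 u u] by (auto intro: walk.intros)

lemma gdist_pos: 
  assumes "simple_graph V E" "E u v" shows "gdist E u v = 1"
proof -
  have "gdist E u v \<noteq> 0"
  proof
    assume "gdist E u v = 0"
    have w1: "walk E 1 u v" using assms(2) by (auto intro: walk.intros)
    have "walk E (gdist E u v) u v" unfolding gdist_def by (rule LeastI[of _ 1]) (rule w1)
    then have "walk E 0 u v" using \<open>gdist E u v = 0\<close> by simp
    then have "u = v" by (rule walk_0)
    then show False using assms unfolding simple_graph_def by blast
  qed
  then show ?thesis using gdist_edge[of E u v] assms(2) by simp
qed

lemma gdist_last:
  assumes "simple_graph V E" "connected_graph V E" "x \<in> V" "c \<in> V" "gdist E x c = Suc j"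
  shows "\<exists>w\<in>V. E w c \<and> gdist E x w = j"
proof -
  have s: "\<forall>a b. E a b \<longrightarrow> E b a" using assms(1) unfolding simple_graph_def by blast
  have "walk E (Suc j) c x" using walk_sym[OF s gdist_walk[OF assms(2,3,4)]] assms(5) by simp
  then obtain w where w: "E c w" "walk E j w x" using walk_Suc[of E j c x] by blast
  have wV: "w \<in> V" using w(1) assms(1) unfolding simple_graph_def by blast
  have "gdist E x w \<le> j" using gdist_le[OF walk_sym[OF s w(2)]] .
  moreover have "gdist E x c \<le> gdist E x w + gdist E w c"
    using gdist_tri[OF assms(2,3) wV assms(4)] .
  moreover have "gdist E w c \<le> 1" using gdist_edge[of E w c] s w(1) by blast
  ultimately have "gdist E x w = j" using assms(5) by linarith
  then show ?thesis using w(1) s wV by blast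
qed

lemma weak_duality:
  fixes m1 m2 g1 g2 :: "'a \<Rightarrow> real" and D :: "'a \<Rightarrow> 'a \<Rightarrow> real"
  assumes fin: "finite V" and cp: "coupling V m1 m2 A"
    and lip: "\<And>u u'. u \<in> V \<Longrightarrow> u' \<in> V \<Longrightarrow> m1 u \<noteq> 0 \<Longrightarrow> m2 u' \<noteq> 0 \<Longrightarrow> g1 u - g2 u' \<le> D u u'"
  shows "(\<Sum>u\<in>V. m1 u * g1 u) - (\<Sum>u\<in>V. m2 u * g2 u) \<le> (\<Sum>u\<in>V. \<Sum>u'\<in>V. A u u' * D u u')"
proof -
  have nn: "\<And>u u'. u \<in> V \<Longrightarrow> u' \<in> V \<Longrightarrow> 0 \<le> A u u'" using cp unfolding coupling_def by blast
  have row: "\<And>u. u \<in> V \<Longrightarrow> (\<Sum>u'\<in>V. A u u') = m1 u" using cp unfolding coupling_def by blast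
  have col: "\<And>u'. u' \<in> V \<Longrightarrow> (\<Sum>u\<in>V. A u u') = m2 u'" using cp unfolding coupling_def by blast
  have pt: "A u u' * (g1 u - g2 u') \<le> A u u' * D u u'" if "u \<in> V" "u' \<in> V" for u u'
  proof (cases "A u u' = 0")
    case True then show ?thesis by simp
  next
    case False
    then have pos: "A u u' > 0" using nn that by force
    have "A u u' \<le> (\<Sum>v\<in>V. A u v)" by (rule member_le_sum) (use that nn fin in auto)
    then have "m1 u \<noteq> 0" using row[OF that(1)] pos by linarith
    moreover have "A u u' \<le> (\<Sum>v\<in>V. A v u')" by (rule member_le_sum) (use that nn fin in auto)
    then have "m2 u' \<noteq> 0" using col[OF that(2)] pos by linarith
    ultimately have "g1 u - g2 u' \<le> D u u'" using lip that by blast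
    then show ?thesis using pos by (simp add: mult_left_mono)
  qed
  have "(\<Sum>u\<in>V. \<Sum>u'\<in>V. A u u' * (g1 u - g2 u')) =
        (\<Sum>u\<in>V. \<Sum>u'\<in>V. A u u' * g1 u) - (\<Sum>u\<in>V. \<Sum>u'\<in>V. A u u' * g2 u')"
    by (simp add: right_diff_distrib sum_subtractf)
  also have "(\<Sum>u\<in>V. \<Sum>u'\<in>V. A u u' * g1 u) = (\<Sum>u\<in>V. m1 u * g1 u)"
    by (rule sum.cong) (auto simp: row sum_distrib_right[symmetric])
  also have "(\<Sum>u\<in>V. \<Sum>u'\<in>V. A u u' * g2 u') = (\<Sum>u'\<in>V. \<Sum>u\<in>V. A u u' * g2 u')"
    by (rule sum.swap)
  also have "\<dots> = (\<Sum>u'\<in>V. m2 u' * g2 u')"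
    by (rule sum.cong) (auto simp: col sum_distrib_right[symmetric])
  finally have eq: "(\<Sum>u\<in>V. \<Sum>u'\<in>V. A u u' * (g1 u - g2 u')) = (\<Sum>u\<in>V. m1 u * g1 u) - (\<Sum>u\<in>V. m2 u * g2 u)" .
  have "(\<Sum>u\<in>V. \<Sum>u'\<in>V. A u u' * (g1 u - g2 u')) \<le> (\<Sum>u\<in>V. \<Sum>u'\<in>V. A u u' * D u u')"
    by (intro sum_mono) (use pt in auto)
  then show ?thesis using eq by simp
qed

lemma prod_coupling:
  fixes m1 m2 :: "'a \<Rightarrow> real"
  assumes "\<And>u. u \<in> V \<Longrightarrow> 0 \<le> m1 u \<and> m1 u \<le> 1" "\<And>u. u \<in> V \<Longrightarrow> 0 \<le> m2 u \<and> m2 u \<le> 1"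
    "(\<Sum>u\<in>V. m1 u) = 1" "(\<Sum>u\<in>V. m2 u) = 1"
  shows "coupling V m1 m2 (\<lambda>u v. m1 u * m2 v)"
  unfolding coupling_def
proof (intro conjI ballI)
  fix u v assume "u \<in> V" "v \<in> V"
  then show "0 \<le> m1 u * m2 v" using assms by auto
  show "m1 u * m2 v \<le> 1" using assms \<open>u \<in> V\<close> \<open>v \<in> V\<close> by (simp add: mult_le_one)
next
  fix u assume "u \<in> V"
  show "(\<Sum>v\<in>V. m1 u * m2 v) = m1 u" by (simp add: sum_distrib_left[symmetric] assms(4))
next
  fix v assume "v \<in> V"
  show "(\<Sum>u\<in>V. m1 u * m2 v) = m2 v" by (simp add: sum_distrib_right[symmetric] assms(3))
qed

lemma transport_ge:
  fixes m1 m2 g1 g2 :: "'a \<Rightarrow> real"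
  assumes fin: "finite V" and ex: "\<exists>A. coupling V m1 m2 A"
    and lip: "\<And>u u'. u \<in> V \<Longrightarrow> u' \<in> V \<Longrightarrow> m1 u \<noteq> 0 \<Longrightarrow> m2 u' \<noteq> 0 \<Longrightarrow> g1 u - g2 u' \<le> real (gdist E u u')"
  shows "(\<Sum>u\<in>V. m1 u * g1 u) - (\<Sum>u\<in>V. m2 u * g2 u) \<le> transport V E m1 m2"
  unfolding transport_def
  by (rule cInf_greatest) (use ex weak_duality[OF fin _ lip] in auto)

lemma transport_le:
  assumes "coupling V m1 m2 A"
  shows "transport V E m1 m2 \<le> (\<Sum>x\<in>V. \<Sum>y\<in>V. A x y * real (gdist E x y))"
  unfolding transport_def
proof (rule cInf_lower)
  show "(\<Sum>x\<in>V. \<Sum>y\<in>V. A x y * real (gdist E x y)) \<in> {\<Sum>x\<in>V. \<Sum>y\<in>V. A x y * real (gdist E x y) |A. coupling V m1 m2 A}"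
    using assms by blast
  show "bdd_below {\<Sum>x\<in>V. \<Sum>y\<in>V. A x y * real (gdist E x y) |A. coupling V m1 m2 A}"
  proof (rule bdd_belowI[of _ 0])
    fix z assume "z \<in> {\<Sum>x\<in>V. \<Sum>y\<in>V. A x y * real (gdist E x y) |A. coupling V m1 m2 A}"
    then obtain B where "coupling V m1 m2 B" "z = (\<Sum>x\<in>V. \<Sum>y\<in>V. B x y * real (gdist E x y))" by blast
    then show "0 \<le> z" unfolding coupling_def by (auto intro!: sum_nonneg)
  qed
qed

lemma nbhd_sub: "nbhd V E c \<subseteq> V" unfolding nbhd_def by auto

lemma nbhd_fin: "simple_graph V E \<Longrightarrow> finite (nbhd V E c)"
  using nbhd_sub unfolding simple_graph_def by (metis finite_subset)

lemma nbhd_notin: "simple_graph V E \<Longrightarrow> c \<notin> nbhd V E c"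
  unfolding simple_graph_def nbhd_def by auto

lemma lw_sum:
  fixes g :: "'a \<Rightarrow> real"
  assumes sg: "simple_graph V E" and c: "c \<in> V"
  shows "(\<Sum>u\<in>V. lazy_walk V E \<alpha> c u * g u) = \<alpha> * g c + (1-\<alpha>)/real (deg V E c) * (\<Sum>u\<in>nbhd V E c. g u)"
proof -
  have fin: "finite V" using sg unfolding simple_graph_def by blast
  have "(\<Sum>u\<in>V. lazy_walk V E \<alpha> c u * g u) =
        (\<Sum>u\<in>V. (if u = c then \<alpha> * g u else 0) + (if u \<in> nbhd V E c then (1-\<alpha>)/real (deg V E c) * g u else 0))"
    by (rule sum.cong) (use nbhd_notin[OF sg] in \<open>auto simp: lazy_walk_def\<close>)
  also have "\<dots> = (\<Sum>u\<in>V. (if u = c then \<alpha> * g u else 0)) + (\<Sum>u\<in>V. (if u \<in> nbhd V E c then (1-\<alpha>)/real (deg V E c) * g u else 0))"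
    by (rule sum.distrib)
  also have "(\<Sum>u\<in>V. (if u = c then \<alpha> * g u else 0)) = \<alpha> * g c"
    using sum.delta[OF fin, of c "\<lambda>u. \<alpha> * g u"] c by simp
  also have "(\<Sum>u\<in>V. (if u \<in> nbhd V E c then (1-\<alpha>)/real (deg V E c) * g u else 0)) = (\<Sum>u\<in>V \<inter> nbhd V E c. (1-\<alpha>)/real (deg V E c) * g u)"
    by (rule sum.inter_restrict[OF fin, symmetric])
  also have "V \<inter> nbhd V E c = nbhd V E c" using nbhd_sub[of V E c] by blast
  finally show ?thesis by (simp add: sum_distrib_left)
qed

lemma lw_total:
  assumes sg: "simple_graph V E" and c: "c \<in> V" and d: "deg V E c > 0"
  shows "(\<Sum>u\<in>V. lazy_walk V E \<alpha> c u) = 1"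
  using lw_sum[OF sg c, of \<alpha> "\<lambda>_. 1"] d by (simp add: deg_def)

lemma lw_bounds:
  assumes d: "deg V E c > 0" and a: "0 \<le> \<alpha>" "\<alpha> \<le> 1"
  shows "0 \<le> lazy_walk V E \<alpha> c u \<and> lazy_walk V E \<alpha> c u \<le> 1"
proof -
  have "(1 - \<alpha>) / real (deg V E c) \<le> 1"
  proof -
    have "real (deg V E c) \<ge> 1" using d by simp
    then show ?thesis using a by (auto simp: divide_le_eq)
  qed
  then show ?thesis using a unfolding lazy_walk_def by auto
qed

lemma lw_coupling_ex:
  assumes sg: "simple_graph V E" and c: "c \<in> V" "w \<in> V" and d: "deg V E c > 0" "deg V E w > 0"
    and a: "0 \<le> \<alpha>" "\<alpha> \<le> 1"
  shows "\<exists>A. coupling V (lazy_walk V E \<alpha> c) (lazy_walk V E \<alpha> w) A"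
  using prod_coupling[of V "lazy_walk V E \<alpha> c" "lazy_walk V E \<alpha> w"] lw_bounds[OF d(1) a] lw_bounds[OF d(2) a]
    lw_total[OF sg c(1) d(1)] lw_total[OF sg c(2) d(2)] by blast

lemma lw_supp: "lazy_walk V E \<alpha> c u \<noteq> 0 \<Longrightarrow> u = c \<or> E c u"
  unfolding lazy_walk_def nbhd_def by (auto split: if_splits)

lemma lw_mix:
  assumes "a < 1" "t = (1 - b) / (1 - a)"
  shows "lazy_walk V E b c u = t * lazy_walk V E a c u + (1 - t) * (if u = c then 1 else 0)"
proof -
  have t: "t * (1 - a) = 1 - b" using assms by simp
  show ?thesis
  proof (cases "u = c")
    case True then show ?thesis unfolding lazy_walk_def using t by (simp add: algebra_simps)
  next
    case False
    then show ?thesis unfolding lazy_walk_def using t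
      by (simp add: algebra_simps)
  qed
qed

lemma transport_mix:
  assumes sg: "simple_graph V E" and cw: "c \<in> V" "w \<in> V" "E c w"
    and cp: "coupling V (lazy_walk V E a c) (lazy_walk V E a w) A"
    and ab: "0 < a" "a \<le> b" "b < 1" and t: "t = (1 - b) / (1 - a)"
  shows "transport V E (lazy_walk V E b c) (lazy_walk V E b w) \<le> t * (\<Sum>x\<in>V. \<Sum>y\<in>V. A x y * real (gdist E x y)) + (1 - t)"
proof -
  have fin: "finite V" using sg unfolding simple_graph_def by blast
  have t0: "0 < t" "t \<le> 1" using ab t by auto
  have am: "a < 1" using ab by simp
  define \<delta> where "\<delta> = (\<lambda>x y. if x = c \<and> y = w then (1::real) else 0)"
  define A' where "A' = (\<lambda>x y. t * A x y + (1 - t) * \<delta> x y)"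
  have rowd: "(\<Sum>y\<in>V. \<delta> x y) = (if x = c then 1 else 0)" for x
    using sum.delta[OF fin, of w "\<lambda>_. 1::real"] cw unfolding \<delta>_def by (auto simp: if_distrib cong: if_cong)
  have cold: "(\<Sum>x\<in>V. \<delta> x y) = (if y = w then 1 else 0)" for y
    using sum.delta[OF fin, of c "\<lambda>_. 1::real"] cw unfolding \<delta>_def by (auto simp: if_distrib cong: if_cong)
  have "coupling V (lazy_walk V E b c) (lazy_walk V E b w) A'"
    unfolding coupling_def
  proof (intro conjI ballI)
    fix x y assume xy: "x \<in> V" "y \<in> V"
    have "0 \<le> A x y" "A x y \<le> 1" using cp xy unfolding coupling_def by auto
    moreover have "0 \<le> \<delta> x y" "\<delta> x y \<le> 1" unfolding \<delta>_def by auto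
    ultimately show "0 \<le> A' x y" "A' x y \<le> 1" unfolding A'_def using t0
      by (auto intro!: add_nonneg_nonneg mult_nonneg_nonneg)
        (smt (verit) mult_left_le mult_right_mono)
  next
    fix x assume x: "x \<in> V"
    have "(\<Sum>y\<in>V. A' x y) = t * (\<Sum>y\<in>V. A x y) + (1 - t) * (\<Sum>y\<in>V. \<delta> x y)"
      unfolding A'_def by (simp add: sum.distrib sum_distrib_left)
    also have "\<dots> = lazy_walk V E b c x"
      using cp x rowd unfolding coupling_def
      by (simp add: lw_mix[OF am t])
    finally show "(\<Sum>y\<in>V. A' x y) = lazy_walk V E b c x" .
  next
    fix y assume y: "y \<in> V"
    have "(\<Sum>x\<in>V. A' x y) = t * (\<Sum>x\<in>V. A x y) + (1 - t) * (\<Sum>x\<in>V. \<delta> x y)"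
      unfolding A'_def by (simp add: sum.distrib sum_distrib_left)
    also have "\<dots> = lazy_walk V E b w y"
      using cp y cold unfolding coupling_def
      by (simp add: lw_mix[OF am t])
    finally show "(\<Sum>x\<in>V. A' x y) = lazy_walk V E b w y" .
  qed
  then have "transport V E (lazy_walk V E b c) (lazy_walk V E b w) \<le> (\<Sum>x\<in>V. \<Sum>y\<in>V. A' x y * real (gdist E x y))"
    by (rule transport_le)
  also have "(\<Sum>x\<in>V. \<Sum>y\<in>V. A' x y * real (gdist E x y)) =
     (\<Sum>x\<in>V. t * (\<Sum>y\<in>V. A x y * real (gdist E x y)) + (1 - t) * (\<Sum>y\<in>V. \<delta> x y * real (gdist E x y)))"
    unfolding A'_def by (intro sum.cong refl) (simp add: sum.distrib sum_distrib_left distrib_right mult.assoc)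
  also have "\<dots> = t * (\<Sum>x\<in>V. \<Sum>y\<in>V. A x y * real (gdist E x y)) + (1 - t) * (\<Sum>x\<in>V. \<Sum>y\<in>V. \<delta> x y * real (gdist E x y))"
    by (simp add: sum.distrib sum_distrib_left)
  also have "(\<Sum>x\<in>V. \<Sum>y\<in>V. \<delta> x y * real (gdist E x y)) = real (gdist E c w)"
  proof -
    have "(\<Sum>x\<in>V. \<Sum>y\<in>V. \<delta> x y * real (gdist E x y)) = (\<Sum>x\<in>V. if x = c then real (gdist E c w) else 0)"
    proof (rule sum.cong)
      fix x assume "x \<in> V"
      show "(\<Sum>y\<in>V. \<delta> x y * real (gdist E x y)) = (if x = c then real (gdist E c w) else 0)"
      proof (cases "x = c")
        case True
        have "(\<Sum>y\<in>V. \<delta> x y * real (gdist E x y)) = (\<Sum>y\<in>V. if y = w then real (gdist E c y) else 0)"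
          by (rule sum.cong) (auto simp: \<delta>_def True)
        then show ?thesis using sum.delta[OF fin, of w "\<lambda>y. real (gdist E c y)"] cw True by simp
      next
        case False then show ?thesis by (simp add: \<delta>_def)
      qed
    qed simp
    also have "\<dots> = real (gdist E c w)" using sum.delta[OF fin, of c] cw by simp
    finally show ?thesis .
  qed
  also have "real (gdist E c w) = 1" using gdist_pos[OF sg cw(3)] by simp
  finally show ?thesis by simp
qed

lemma kappa_mono:
  assumes sg: "simple_graph V E" and cw: "c \<in> V" "w \<in> V" "E c w"
    and d: "deg V E c > 0" "deg V E w > 0"
    and ab: "0 < a" "a \<le> b" "b < 1"
  shows "kappa_alpha V E a c w / (1 - a) \<le> kappa_alpha V E b c w / (1 - b)"
proof -
  define t where "t = (1 - b) / (1 - a)"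
  have t0: "0 < t" "t \<le> 1" using ab t_def by auto
  let ?Wa = "transport V E (lazy_walk V E a c) (lazy_walk V E a w)"
  let ?Wb = "transport V E (lazy_walk V E b c) (lazy_walk V E b w)"
  have ex: "\<exists>A. coupling V (lazy_walk V E a c) (lazy_walk V E a w) A"
    using lw_coupling_ex[OF sg cw(1,2) d] ab by simp
  have "(?Wb - (1 - t)) / t \<le> ?Wa"
    unfolding transport_def[of V E "lazy_walk V E a c"]
  proof (rule cInf_greatest)
    show "{\<Sum>x\<in>V. \<Sum>y\<in>V. A x y * real (gdist E x y) |A. coupling V (lazy_walk V E a c) (lazy_walk V E a w) A} \<noteq> {}"
      using ex by blast
  next
    fix z assume "z \<in> {\<Sum>x\<in>V. \<Sum>y\<in>V. A x y * real (gdist E x y) |A. coupling V (lazy_walk V E a c) (lazy_walk V E a w) A}"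
    then obtain A where A: "coupling V (lazy_walk V E a c) (lazy_walk V E a w) A"
      "z = (\<Sum>x\<in>V. \<Sum>y\<in>V. A x y * real (gdist E x y))" by blast
    have "?Wb \<le> t * z + (1 - t)" using transport_mix[OF sg cw A(1) ab t_def] A(2) by simp
    then show "(?Wb - (1 - t)) / t \<le> z" using t0 by (simp add: divide_le_eq mult.commute)
  qed
  then have Wb: "?Wb \<le> t * ?Wa + (1 - t)" using t0 by (simp add: divide_le_eq mult.commute)
  have g: "real (gdist E c w) = 1" using gdist_pos[OF sg cw(3)] by simp
  have "kappa_alpha V E b c w \<ge> t * kappa_alpha V E a c w"
    unfolding kappa_alpha_def g using Wb by (simp add: algebra_simps)
  then have "kappa_alpha V E b c w / (1 - b) \<ge> t * kappa_alpha V E a c w / (1 - b)"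
    using ab by (simp add: divide_right_mono)
  moreover have "t * kappa_alpha V E a c w / (1 - b) = kappa_alpha V E a c w / (1 - a)"
  proof -
    have nz: "1 - b \<noteq> 0" "1 - a \<noteq> 0" using ab by auto
    have ht: "t * (1 - a) = 1 - b" using nz unfolding t_def by simp
    have "t * kappa_alpha V E a c w * (1 - a) = kappa_alpha V E a c w * (1 - b)"
      using ht by (metis mult.commute mult.left_commute)
    then show ?thesis using nz by (simp add: frac_eq_eq)
  qed
  ultimately show ?thesis by simp
qed

lemma LLY_le:
  assumes sg: "simple_graph V E" and cw: "c \<in> V" "w \<in> V" "E c w"
    and d: "deg V E c > 0" "deg V E w > 0"
    and bnd: "\<And>\<alpha>. 0 < \<alpha> \<Longrightarrow> \<alpha> < 1 \<Longrightarrow> kappa_alpha V E \<alpha> c w / (1 - \<alpha>) \<le> K"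
  shows "kappa_LLY V E c w \<le> K"
proof -
  define f where "f = (\<lambda>\<alpha>. kappa_alpha V E \<alpha> c w / (1 - \<alpha>))"
  define I where "I = {0<..<(1::real)}"
  have lim: "(f \<longlongrightarrow> Sup (f ` ({..<1} \<inter> I))) (at 1 within ({..<1} \<inter> I))"
  proof (rule Lim_left_bound)
    fix a b assume "a \<in> I" "b \<in> I" "b < 1" "a \<le> b"
    then show "f a \<le> f b" unfolding f_def I_def using kappa_mono[OF sg cw d] by auto
  next
    fix b assume "b \<in> I" "b < 1"
    then show "f b \<le> K" unfolding f_def I_def using bnd by auto
  qed
  have "at (1::real) within ({..<1} \<inter> I) = at 1 within {..<1}"
    by (rule at_within_nhd[of _ "{0<..}"]) (auto simp: I_def)
  then have lim2: "(f \<longlongrightarrow> Sup (f ` ({..<1} \<inter> I))) (at_left 1)" using lim by simp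
  have "kappa_LLY V E c w = Sup (f ` ({..<1} \<inter> I))"
    unfolding kappa_LLY_def f_def[symmetric]
    by (rule tendsto_Lim[OF _ lim2]) simp
  also have "\<dots> \<le> K"
  proof (rule cSup_least)
    have "1/2 \<in> {..<1} \<inter> I" by (auto simp: I_def)
    then show "f ` ({..<1} \<inter> I) \<noteq> {}" by blast
  qed (auto simp: I_def f_def intro!: bnd)
  finally show ?thesis .
qed

definition gf :: "('a \<Rightarrow> 'a \<Rightarrow> bool) \<Rightarrow> 'a \<Rightarrow> 'a \<Rightarrow> 'a \<Rightarrow> real" where
  "gf E x c u = (if u = c then real (gdist E x c)
     else if gdist E x u < gdist E x c then real (gdist E x c) - 1 else real (gdist E x c) + 1)"

definition bv :: "'a set \<Rightarrow> ('a \<Rightarrow> 'a \<Rightarrow> bool) \<Rightarrow> 'a \<Rightarrow> 'a \<Rightarrow> real" where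
  "bv V E x c = (\<Sum>u\<in>nbhd V E c. if gdist E x u < gdist E x c then -1 else 1) / real (deg V E c)"

lemma exp_gf:
  assumes sg: "simple_graph V E" and c: "c \<in> V" and d: "deg V E c > 0"
  shows "(\<Sum>u\<in>V. lazy_walk V E \<alpha> c u * gf E x c u) = real (gdist E x c) + (1 - \<alpha>) * bv V E x c"
proof -
  let ?L = "real (gdist E x c)"
  let ?s = "\<lambda>u. if gdist E x u < gdist E x c then -1 else (1::real)"
  let ?S = "\<Sum>u\<in>nbhd V E c. ?s u"
  have "(\<Sum>u\<in>nbhd V E c. gf E x c u) = (\<Sum>u\<in>nbhd V E c. ?L + ?s u)"
    by (rule sum.cong) (use nbhd_notin[OF sg, of c] in \<open>auto simp: gf_def\<close>)
  also have "\<dots> = real (deg V E c) * ?L + ?S"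
    by (simp add: sum.distrib deg_def)
  finally have sN: "(\<Sum>u\<in>nbhd V E c. gf E x c u) = real (deg V E c) * ?L + ?S" .
  have gc: "gf E x c c = ?L" by (simp add: gf_def)
  have dpos: "real (deg V E c) > 0" using d by simp
  have "(\<Sum>u\<in>V. lazy_walk V E \<alpha> c u * gf E x c u) = \<alpha> * ?L + (1 - \<alpha>) / real (deg V E c) * (real (deg V E c) * ?L + ?S)"
    using lw_sum[OF sg c, of \<alpha> "gf E x c"] sN gc by simp
  also have "\<dots> = ?L + (1 - \<alpha>) * (?S / real (deg V E c))"
    using dpos by (simp add: field_simps)
  finally show ?thesis unfolding bv_def .
qed

lemma lip:
  assumes sg: "simple_graph V E" and cn: "connected_graph V E"
    and nC3: "\<not> has_C3 V E" and nC5: "\<not> has_C5 V E" and xV: "x \<in> V"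
    and wc: "E w c" and lev: "gdist E x c = gdist E x w + 1"
    and uV: "u \<in> V" and u'V: "u' \<in> V" and hu: "u = c \<or> E c u" and hu': "u' = w \<or> E w u'"
  shows "gf E x c u - gf E x w u' \<le> real (gdist E u u')"
proof -
  have sym: "\<And>a b. E a b \<Longrightarrow> E b a" using sg unfolding simple_graph_def by blast
  have irr: "\<And>a. \<not> E a a" using sg unfolding simple_graph_def by blast
  have inV: "\<And>a b. E a b \<Longrightarrow> a \<in> V \<and> b \<in> V" using sg unfolding simple_graph_def by blast
  have cV: "c \<in> V" and wV: "w \<in> V" using inV[OF wc] by auto
  define L where "L = gdist E x"
  define D where "D = gdist E u u'"
  have F1a: "L u \<le> L u' + D"
    using gdist_tri[OF cn xV u'V uV] gdist_sym[OF sg cn uV u'V] unfolding L_def D_def by simp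
  have F1b: "L u' \<le> L u + D"
    using gdist_tri[OF cn xV uV u'V] unfolding L_def D_def by simp
  have F2: "\<And>a b. E a b \<Longrightarrow> L b \<le> L a + 1"
  proof -
    fix a b assume ab: "E a b"
    have "gdist E x b \<le> gdist E x a + gdist E a b" using gdist_tri[OF cn xV] inV[OF ab] by blast
    then show "L b \<le> L a + 1" using gdist_edge[of E a b] ab unfolding L_def by linarith
  qed
  have tri: "\<And>a b c'. E a b \<Longrightarrow> E b c' \<Longrightarrow> E c' a \<Longrightarrow> False"
  proof -
    fix a b c' assume h: "E a b" "E b c'" "E c' a"
    have "distinct [a, b, c']" using h irr by auto
    then show False using nC3 h inV unfolding has_C3_def by blast
  qed
  have c5: "\<And>a b c' d e. distinct [a, b, c', d, e] \<Longrightarrow> E a b \<Longrightarrow> E b c' \<Longrightarrow> E c' d \<Longrightarrow> E d e \<Longrightarrow> E e a \<Longrightarrow> False"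
    using nC5 inV unfolding has_C5_def by blast
  have D0: "D = 0 \<Longrightarrow> u = u'" using gdist_0[OF cn uV u'V] unfolding D_def by blast
  have D1: "D = 1 \<Longrightarrow> E u u'" using gdist_1[OF cn uV u'V] unfolding D_def by blast
  have D2: "D = 2 \<Longrightarrow> \<exists>z. E u z \<and> E z u'" using gdist_2[OF cn uV u'V] unfolding D_def by blast
  have lev': "L c = L w + 1" using lev unfolding L_def by simp
  have wnc: "w \<noteq> c" using wc irr by blast
  have g2w: "gf E x w w = real (L w)" unfolding gf_def L_def by simp
  have g1c: "gf E x c c = real (L c)" unfolding gf_def L_def by simp
  have g1B: "E c u \<Longrightarrow> L u < L c \<Longrightarrow> gf E x c u = real (L c) - 1"
    using irr unfolding gf_def L_def by (metis)
  have g1C: "E c u \<Longrightarrow> \<not> L u < L c \<Longrightarrow> gf E x c u = real (L c) + 1"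
    using irr unfolding gf_def L_def by (metis)
  have g2b: "E w u' \<Longrightarrow> L u' < L w \<Longrightarrow> gf E x w u' = real (L w) - 1"
    using irr unfolding gf_def L_def by (metis)
  have g2c: "E w u' \<Longrightarrow> \<not> L u' < L w \<Longrightarrow> gf E x w u' = real (L w) + 1"
    using irr unfolding gf_def L_def by (metis)
  have main: "gf E x c u - gf E x w u' \<le> real D"
  proof -
    from hu consider (A) "u = c" | (B) "E c u" "L u < L c" | (C) "E c u" "\<not> L u < L c" by blast
    then show ?thesis
    proof cases
      case A
      from hu' consider (a) "u' = w" | (b) "E w u'" "L u' < L w" | (cc) "E w u'" "\<not> L u' < L w" by blast
      then show ?thesis
      proof cases
        case a then show ?thesis using A g1c g2w lev' F1a by simp
      next
        case b then show ?thesis using A g1c g2b lev' F1a by simp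
      next
        case cc then show ?thesis using A g1c g2c lev' by simp
      qed
    next
      case B
      have Lu: "L c \<le> L u + 1" using F2[OF sym[OF B(1)]] .
      from hu' consider (a) "u' = w" | (b) "E w u'" "L u' < L w" | (cc) "E w u'" "\<not> L u' < L w" by blast
      then show ?thesis
      proof cases
        case a then show ?thesis using B g1B g2w lev' by simp
      next
        case b then show ?thesis using B g1B g2b lev' F1a Lu by simp
      next
        case cc then show ?thesis using B g1B g2c lev' by simp
      qed
    next
      case C
      from hu' consider (a) "u' = w" | (b) "E w u'" "L u' < L w" | (cc) "E w u'" "\<not> L u' < L w" by blast
      then show ?thesis
      proof cases
        case a
        have "D \<noteq> 0" using D0 a C lev' by auto
        moreover have "D \<noteq> 1" using D1 a C tri wc by blast
        ultimately have "D \<ge> 2" by simp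
        then show ?thesis using C a g1C g2w lev' by simp
      next
        case b
        have Lw: "L w \<le> L u' + 1" using F2[OF sym[OF b(1)]] .
        have "D \<ge> 2" using F1a C b Lw lev' by simp
        moreover have "D \<noteq> 2"
        proof
          assume "D = 2"
          then obtain z where z: "E u z" "E z u'" using D2 by blast
          have zc: "z \<noteq> c"
          proof
            assume "z = c"
            then have "L c \<le> L u' + 1" using F2[OF sym[OF z(2)]] by simp
            then show False using b Lw lev' by simp
          qed
          have zw: "z \<noteq> w"
          proof
            assume "z = w" then show False using tri C(1) z(1) wc by blast
          qed
          have "distinct [c, u, z, u', w]"
            using zc zw irr C b z lev' wc Lw by auto
          then show False using c5 C(1) z sym[OF b(1)] wc by blast
        qed
        ultimately have "D \<ge> 3" by simp
        then show ?thesis using C b g1C g2b lev' by simp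
      next
        case cc
        have "u \<noteq> u'" using tri C(1) cc(1) wc sym by blast
        then have "D \<ge> 1" using D0 by fastforce
        then show ?thesis using C cc g1C g2c lev' by simp
      qed
    qed
  qed
  then show ?thesis unfolding D_def .
qed

lemma deg_pos_edge:
  assumes sg: "simple_graph V E" and e: "E c w" shows "deg V E c > 0"
proof -
  have "w \<in> nbhd V E c" using e sg unfolding nbhd_def simple_graph_def by blast
  then show ?thesis unfolding deg_def using nbhd_fin[OF sg, of c] card_gt_0_iff by blast
qed

lemma edge_bound:
  assumes sg: "simple_graph V E" and cn: "connected_graph V E"
    and nC3: "\<not> has_C3 V E" and nC5: "\<not> has_C5 V E" and xV: "x \<in> V"
    and wc: "E w c" and lev: "gdist E x c = gdist E x w + 1"
    and a: "0 < \<alpha>" "\<alpha> < 1"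
  shows "kappa_alpha V E \<alpha> c w / (1 - \<alpha>) \<le> bv V E x w - bv V E x c"
proof -
  have sym: "\<And>a b. E a b \<Longrightarrow> E b a" using sg unfolding simple_graph_def by blast
  have inV: "\<And>a b. E a b \<Longrightarrow> a \<in> V \<and> b \<in> V" using sg unfolding simple_graph_def by blast
  have cV: "c \<in> V" and wV: "w \<in> V" using inV[OF wc] by auto
  have cw: "E c w" using sym[OF wc] .
  have dc: "deg V E c > 0" using deg_pos_edge[OF sg cw] .
  have dw: "deg V E w > 0" using deg_pos_edge[OF sg wc] .
  have fin: "finite V" using sg unfolding simple_graph_def by blast
  have ex: "\<exists>A. coupling V (lazy_walk V E \<alpha> c) (lazy_walk V E \<alpha> w) A"
    using lw_coupling_ex[OF sg cV wV dc dw] a by simp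
  have "(\<Sum>u\<in>V. lazy_walk V E \<alpha> c u * gf E x c u) - (\<Sum>u\<in>V. lazy_walk V E \<alpha> w u * gf E x w u)
        \<le> transport V E (lazy_walk V E \<alpha> c) (lazy_walk V E \<alpha> w)"
  proof (rule transport_ge[OF fin ex])
    fix u u' assume "u \<in> V" "u' \<in> V" "lazy_walk V E \<alpha> c u \<noteq> 0" "lazy_walk V E \<alpha> w u' \<noteq> 0"
    then show "gf E x c u - gf E x w u' \<le> real (gdist E u u')"
      using lip[OF sg cn nC3 nC5 xV wc lev] lw_supp by metis
  qed
  then have "1 + (1 - \<alpha>) * (bv V E x c - bv V E x w) \<le> transport V E (lazy_walk V E \<alpha> c) (lazy_walk V E \<alpha> w)"
    using exp_gf[OF sg cV dc, of \<alpha> x] exp_gf[OF sg wV dw, of \<alpha> x] lev by (simp add: algebra_simps)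
  moreover have "real (gdist E c w) = 1" using gdist_pos[OF sg cw] by simp
  ultimately have "kappa_alpha V E \<alpha> c w \<le> (1 - \<alpha>) * (bv V E x w - bv V E x c)"
    unfolding kappa_alpha_def by (simp add: algebra_simps)
  then show ?thesis using a by (simp add: divide_le_eq mult.commute)
qed

lemma chain:
  assumes sg: "simple_graph V E" and cn: "connected_graph V E"
    and nC3: "\<not> has_C3 V E" and nC5: "\<not> has_C5 V E" and xV: "x \<in> V"
    and curv: "\<forall>u v. E u v \<longrightarrow> kappa_LLY V E u v \<ge> \<kappa>"
  shows "\<forall>c\<in>V. gdist E x c = j \<longrightarrow> bv V E x c \<le> 1 - real j * \<kappa>"
proof (induction j)
  case 0
  show ?case
  proof (intro ballI impI)
    fix c assume cV: "c \<in> V" and "gdist E x c = 0"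
    then have "x = c" using gdist_0[OF cn xV cV] by simp
    then have "bv V E x c = real (card (nbhd V E c)) / real (deg V E c)"
      unfolding bv_def by (simp add: gdist_self)
    also have "\<dots> \<le> 1" unfolding deg_def by (simp add: divide_le_eq)
    finally show "bv V E x c \<le> 1 - real 0 * \<kappa>" by simp
  qed
next
  case (Suc j)
  show ?case
  proof (intro ballI impI)
    fix c assume cV: "c \<in> V" and lc: "gdist E x c = Suc j"
    obtain w where wV: "w \<in> V" and wc: "E w c" and lw: "gdist E x w = j"
      using gdist_last[OF sg cn xV cV lc] by blast
    have sym: "\<And>a b. E a b \<Longrightarrow> E b a" using sg unfolding simple_graph_def by blast
    have "\<kappa> \<le> kappa_LLY V E c w" using curv sym[OF wc] by blast
    also have "\<dots> \<le> bv V E x w - bv V E x c"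
    proof (rule LLY_le[OF sg cV wV sym[OF wc] deg_pos_edge[OF sg sym[OF wc]] deg_pos_edge[OF sg wc]])
      fix \<alpha> :: real assume "0 < \<alpha>" "\<alpha> < 1"
      then show "kappa_alpha V E \<alpha> c w / (1 - \<alpha>) \<le> bv V E x w - bv V E x c"
        using edge_bound[OF sg cn nC3 nC5 xV wc] lc lw by simp
    qed
    finally have "bv V E x c \<le> bv V E x w - \<kappa>" by simp
    also have "\<dots> \<le> 1 - real j * \<kappa> - \<kappa>" using Suc.IH wV lw by simp
    finally show "bv V E x c \<le> 1 - real (Suc j) * \<kappa>" by (simp add: algebra_simps)
  qed
qed

theorem lemma2p1:
  fixes V :: "'a set" and E :: "'a \<Rightarrow> 'a \<Rightarrow> bool" and \<kappa> :: real
    and x y :: 'a and i :: nat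
  assumes "simple_graph V E"
    and "connected_graph V E"
    and "\<not> has_C3 V E"
    and "\<not> has_C5 V E"
    and "\<kappa> > 0"
    and "\<forall>u v. E u v \<longrightarrow> kappa_LLY V E u v \<ge> \<kappa>"
    and "x \<in> V" and "y \<in> V"
    and "gdist E x y = i"
    and "1 \<le> i" and "i \<le> diam V E"
    and "real (diam V E) \<le> real_of_int \<lfloor>2 / \<kappa>\<rfloor>"
  shows "real (card (Gamma_plus V E x y)) + real (card (Gamma_zero V E x y))
           \<le> (1 - real i * \<kappa> / 2) * real (deg V E y)"
proof -
  note sg = assms(1) and cn = assms(2) and xV = assms(7) and yV = assms(8) and ly = assms(9)
  have sym: "\<And>a b. E a b \<Longrightarrow> E b a" using sg unfolding simple_graph_def by blast
  have inV: "\<And>a b. E a b \<Longrightarrow> a \<in> V \<and> b \<in> V" using sg unfolding simple_graph_def by blast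
  have bvy: "bv V E x y \<le> 1 - real i * \<kappa>"
    using chain[OF assms(1-4,7,6)] yV ly by blast
  have "gdist E x y = Suc (i - 1)" using ly assms(10) by simp
  then obtain w where "w \<in> V" "E w y" using gdist_last[OF sg cn xV yV] by blast
  then have dpos: "deg V E y > 0" using deg_pos_edge[OF sg sym] by blast
  define N where "N = nbhd V E y"
  define S where "S = {u \<in> N. gdist E x u < i}"
  define T where "T = {u \<in> N. \<not> gdist E x u < i}"
  have finN: "finite N" unfolding N_def using nbhd_fin[OF sg] .
  have finS: "finite S" "finite T" using finN unfolding S_def T_def by auto
  have NST: "N = S \<union> T" "S \<inter> T = {}" unfolding S_def T_def by auto
  have degST: "deg V E y = card S + card T"
    unfolding deg_def N_def[symmetric] using NST finS card_Un_disjoint by metis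
  have up: "gdist E x u \<le> i + 1" if "u \<in> N" for u
  proof -
    have "E y u" "u \<in> V" using that unfolding N_def nbhd_def by auto
    then show ?thesis using gdist_tri[OF cn xV yV] gdist_edge[of E y u] ly by (meson add_le_mono le_refl order_trans)
  qed
  have GT: "T = Gamma_plus V E x y \<union> Gamma_zero V E x y"
    unfolding T_def Gamma_plus_def Gamma_zero_def N_def[symmetric] ly using up by force
  have Gdisj: "Gamma_plus V E x y \<inter> Gamma_zero V E x y = {}"
    unfolding Gamma_plus_def Gamma_zero_def by auto
  have Gfin: "finite (Gamma_plus V E x y)" "finite (Gamma_zero V E x y)"
    using finS(2) GT by auto
  have cardT: "card T = card (Gamma_plus V E x y) + card (Gamma_zero V E x y)"
    using GT Gdisj Gfin card_Un_disjoint by metis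
  have sumN: "(\<Sum>u\<in>N. if gdist E x u < i then -1 else (1::real)) = real (card T) - real (card S)"
  proof -
    have "(\<Sum>u\<in>N. if gdist E x u < i then -1 else (1::real)) =
          (\<Sum>u\<in>S. if gdist E x u < i then -1 else (1::real)) + (\<Sum>u\<in>T. if gdist E x u < i then -1 else (1::real))"
      using NST finS sum.union_disjoint by metis
    also have "(\<Sum>u\<in>S. if gdist E x u < i then -1 else (1::real)) = (\<Sum>u\<in>S. -1)"
      by (rule sum.cong) (auto simp: S_def)
    also have "(\<Sum>u\<in>T. if gdist E x u < i then -1 else (1::real)) = (\<Sum>u\<in>T. 1)"
      by (rule sum.cong) (auto simp: T_def)
    finally show ?thesis by simp
  qed
  define s where "s = real (card S)"
  define t where "t = real (card T)"
  define k where "k = real i * \<kappa>"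
  have dpos': "s + t > 0"
  proof -
    have "s + t = real (deg V E y)" unfolding s_def t_def degST by simp
    then show ?thesis using dpos by simp
  qed
  have "(t - s) / (s + t) \<le> 1 - k"
    using bvy unfolding bv_def N_def[symmetric] ly sumN degST s_def t_def k_def by simp
  then have h: "t - s \<le> (1 - k) * (s + t)" using dpos' by (simp add: divide_le_eq)
  have e1: "(1 - k) * (s + t) = (s + t) - k * (s + t)" by (simp add: algebra_simps)
  have e2: "(1 - k / 2) * (s + t) = (s + t) - k * (s + t) / 2" by (simp add: algebra_simps)
  define m where "m = k * (s + t)"
  have h': "t - s \<le> (s + t) - m" using h e1 unfolding m_def by simp
  have "t \<le> (s + t) - m / 2" using h' by simp
  then have "t \<le> (1 - k / 2) * (s + t)" using e2 unfolding m_def by simp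
  then show ?thesis unfolding k_def s_def t_def using cardT degST by simp
qed

end
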